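(* Let $M$ be a finite $n$-dimensional simplicial complex and $\alpha\in H^1(M;\mathbb{Z}/2)$ nonzero. Then $\operatorname{cut}^\alpha(M)\le (n+1)\operatorname{Vol}(M)$; more precisely, every $(n-1)$-simplex of a subcomplex attaining $\operatorname{cut}^\alpha(M)$ is a face of some $n$-simplex of $M$.
   Context: $\operatorname{Vol}(M)$ is the number of $n$-simplices of $M$. For nonzero $\alpha\in H^1(M;\mathbb{Z}/2)$, $\operatorname{cut}^\alpha(M)$ is the minimal number of $(n-1)$-simplices in a subcomplex $H\subseteq M$ of dimension at most $n-1$ such that $\alpha$ restricts to zero in $H^1(|M|\setminus|H|;\mathbb{Z}/2)$, where $|M|\setminus|H|$ is the difference of geometric realizations. *)

theory Defs
  imports "HOL-Analysis.Analysis" "HOL-Homology.Homology"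
begin

text \<open>A finite simplicial complex on vertex type 'v: a finite family of finite nonempty
vertex sets (simplices), closed under taking nonempty subsets (faces).
A k-simplex is a simplex with k+1 vertices.\<close>

definition simplicial_complex :: "'v set set \<Rightarrow> bool" where
  "simplicial_complex M \<longleftrightarrow>
     (\<forall>s\<in>M. finite s \<and> s \<noteq> {}) \<and> (\<forall>s\<in>M. \<forall>t. t \<subseteq> s \<and> t \<noteq> {} \<longrightarrow> t \<in> M)"

definition finite_simplicial_complex :: "'v set set \<Rightarrow> bool" where
  "finite_simplicial_complex M \<longleftrightarrow> simplicial_complex M \<and> finite M"

definition sc_dim :: "'v set set \<Rightarrow> nat \<Rightarrow> bool" where
  "sc_dim M n \<longleftrightarrow> (\<exists>s\<in>M. card s = n + 1) \<and> (\<forall>s\<in>M. card s \<le> n + 1)"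

definition simplices_of_dim :: "'v set set \<Rightarrow> nat \<Rightarrow> 'v set set" where
  "simplices_of_dim M k = {s\<in>M. card s = k + 1}"

definition Vol :: "'v set set \<Rightarrow> nat \<Rightarrow> nat" where
  "Vol M n = card (simplices_of_dim M n)"

definition subcomplex :: "'v set set \<Rightarrow> 'v set set \<Rightarrow> bool" where
  "subcomplex H M \<longleftrightarrow> H \<subseteq> M \<and> simplicial_complex H"

text \<open>The standard geometric realization inside the product space 'v \<Rightarrow> real
(barycentric coordinates), with the subspace topology of the product topology.\<close>

definition realization :: "'v set set \<Rightarrow> ('v \<Rightarrow> real) set" where
  "realization M = {x. (\<forall>v. 0 \<le> x v) \<and>
      (\<exists>s\<in>M. {v. x v \<noteq> 0} \<subseteq> s \<and> sum x s = 1)}"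

definition realization_top :: "'v set set \<Rightarrow> ('v \<Rightarrow> real) topology" where
  "realization_top M = subtopology (powertop_real UNIV) (realization M)"

text \<open>Z/2 is represented by bool, with addition = exclusive or (\<noteq>).
A singular k-cochain with Z/2 coefficients is a function on singular k-simplices
(we take functions on all maps; only values on singular simplices matter).\<close>

definition Z2_cocycle1 :: "'a topology \<Rightarrow> (((nat \<Rightarrow> real) \<Rightarrow> 'a) \<Rightarrow> bool) \<Rightarrow> bool" where
  "Z2_cocycle1 X c \<longleftrightarrow>
     (\<forall>\<sigma>. singular_simplex 2 X \<sigma> \<longrightarrow>
        ((c (singular_face 2 0 \<sigma>) \<noteq> c (singular_face 2 1 \<sigma>)) \<noteq> c (singular_face 2 2 \<sigma>)) = False)"

definition Z2_coboundary1 :: "'a topology \<Rightarrow> (((nat \<Rightarrow> real) \<Rightarrow> 'a) \<Rightarrow> bool) \<Rightarrow> bool" where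
  "Z2_coboundary1 X c \<longleftrightarrow>
     (\<exists>f :: ((nat \<Rightarrow> real) \<Rightarrow> 'a) \<Rightarrow> bool.
        \<forall>\<tau>. singular_simplex 1 X \<tau> \<longrightarrow>
          c \<tau> = (f (singular_face 1 0 \<tau>) \<noteq> f (singular_face 1 1 \<tau>)))"

text \<open>The class [c] in H^1(X;Z/2) restricts to zero on the subspace U: the singular
1-simplices of the subspace are those of X with image in U, so the restricted cocycle is
just c evaluated on them.\<close>

definition restricts_to_zero :: "'a topology \<Rightarrow> 'a set \<Rightarrow> (((nat \<Rightarrow> real) \<Rightarrow> 'a) \<Rightarrow> bool) \<Rightarrow> bool" where
  "restricts_to_zero X U c \<longleftrightarrow> Z2_coboundary1 (subtopology X U) c"

definition cut_admissible :: "'v set set \<Rightarrow> nat \<Rightarrow> (((nat \<Rightarrow> real) \<Rightarrow> ('v \<Rightarrow> real)) \<Rightarrow> bool) \<Rightarrow> 'v set set \<Rightarrow> bool" where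
  "cut_admissible M n c H \<longleftrightarrow>
     subcomplex H M \<and> (\<forall>s\<in>H. card s \<le> n) \<and>
     restricts_to_zero (realization_top M) (realization M - realization H) c"

definition cut :: "'v set set \<Rightarrow> nat \<Rightarrow> (((nat \<Rightarrow> real) \<Rightarrow> ('v \<Rightarrow> real)) \<Rightarrow> bool) \<Rightarrow> nat" where
  "cut M n c = (LEAST k. \<exists>H. cut_admissible M n c H \<and> k = card (simplices_of_dim H (n - 1)))"

end

theory Submission
  imports Defs
begin

definition cvx :: "('v \<Rightarrow> real) set \<Rightarrow> bool" where
  "cvx A \<longleftrightarrow> (\<forall>x\<in>A. \<forall>y\<in>A. \<forall>u::real. 0 \<le> u \<and> u \<le> 1 \<longrightarrow> (\<lambda>v. (1-u) * x v + u * y v) \<in> A)"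

definition seg :: "('v \<Rightarrow> real) \<Rightarrow> ('v \<Rightarrow> real) \<Rightarrow> (nat \<Rightarrow> real) \<Rightarrow> ('v \<Rightarrow> real)" where
  "seg p x = restrict (\<lambda>z v. z 0 * p v + z 1 * x v) (standard_simplex 1)"

lemma ss1_sum: "z \<in> standard_simplex 1 \<Longrightarrow> z 0 = 1 - z 1 \<and> 0 \<le> z 1 \<and> z 1 \<le> 1"
  by (auto simp: standard_simplex_def)

lemma seg_ss:
  assumes "cvx A" "p \<in> A" "x \<in> A"
  shows "singular_simplex 1 (subtopology (powertop_real UNIV) A) (seg p x)"
  unfolding singular_simplex_def
proof
  have "continuous_map (subtopology (powertop_real UNIV) (standard_simplex 1)) (powertop_real UNIV)
          (\<lambda>z v. z 0 * p v + z 1 * x v)"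
    unfolding continuous_map_componentwise_UNIV
    by (intro allI continuous_map_from_subtopology continuous_map_add continuous_map_real_mult
        continuous_map_const[THEN iffD2] continuous_map_product_projection) auto
  moreover have "(\<lambda>z v. z 0 * p v + z 1 * x v) ` standard_simplex 1 \<subseteq> A"
  proof
    fix w assume "w \<in> (\<lambda>z v. z 0 * p v + z 1 * x v) ` standard_simplex 1"
    then obtain z where z: "z \<in> standard_simplex 1" and w: "w = (\<lambda>v. z 0 * p v + z 1 * x v)" by auto
    from ss1_sum[OF z] assms show "w \<in> A" unfolding w cvx_def by auto
  qed
  ultimately have "continuous_map (subtopology (powertop_real UNIV) (standard_simplex 1))
       (subtopology (powertop_real UNIV) A) (\<lambda>z v. z 0 * p v + z 1 * x v)"
    by (auto simp add: continuous_map_in_subtopology image_subset_iff)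
  then show "continuous_map (subtopology (powertop_real UNIV) (standard_simplex 1))
       (subtopology (powertop_real UNIV) A) (seg p x)"
    by (rule continuous_map_eq) (simp add: seg_def)
  show "seg p x \<in> extensional (standard_simplex 1)" by (simp add: seg_def)
qed

lemma homot:
  assumes "cvx A" "p \<in> A"
  shows "homotopic_with (\<lambda>h. h \<in> {} \<rightarrow> {}) (subtopology (powertop_real UNIV) A)
           (subtopology (powertop_real UNIV) A) id (\<lambda>_. p)"
  unfolding homotopic_with_def
proof (intro exI conjI)
  let ?h = "\<lambda>(t::real, x::'a\<Rightarrow>real). (\<lambda>v. (1-t) * x v + t * p v)"
  have "continuous_map (prod_topology (top_of_set {0..1::real}) (subtopology (powertop_real UNIV) A))
          (powertop_real UNIV) ?h"
    unfolding continuous_map_componentwise_UNIV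
  proof
    fix v
    have 1: "continuous_map (prod_topology (top_of_set {0..1::real}) (subtopology (powertop_real UNIV) A)) euclideanreal fst"
      by (metis continuous_map_fst continuous_map_into_fulltopology)
    have 2: "continuous_map (prod_topology (top_of_set {0..1::real}) (subtopology (powertop_real UNIV) A)) euclideanreal (\<lambda>y. snd y v)"
      by (rule continuous_map_compose[OF continuous_map_snd, where g="\<lambda>x. x v", simplified o_def])
         (rule continuous_map_from_subtopology, rule continuous_map_product_projection, simp)
    show "continuous_map (prod_topology (top_of_set {0..1::real}) (subtopology (powertop_real UNIV) A)) euclideanreal (\<lambda>x. ?h x v)"
      by (simp add: case_prod_beta) (intro continuous_map_add continuous_map_real_mult continuous_map_diff 1 2 continuous_map_const[THEN iffD2]; simp)
  qed
  moreover have "?h ` topspace (prod_topology (top_of_set {0..1::real}) (subtopology (powertop_real UNIV) A)) \<subseteq> A"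
    using assms by (auto simp: cvx_def)
  ultimately show "continuous_map (prod_topology (top_of_set {0..1::real}) (subtopology (powertop_real UNIV) A))
          (subtopology (powertop_real UNIV) A) ?h"
    by (auto simp add: continuous_map_in_subtopology image_subset_iff)
qed auto

definition Phi :: "(((nat \<Rightarrow> real) \<Rightarrow> 'a) \<Rightarrow> bool) \<Rightarrow> 'a chain \<Rightarrow> int" where
  "Phi c ch = poly_mapping.lookup (frag_extend (\<lambda>\<sigma>. if c \<sigma> then frag_of () else 0) ch) ()"

lemma Phi_diff: "Phi c (a - b) = Phi c a - Phi c b"
  by (simp add: Phi_def frag_extend_diff lookup_minus)

lemma Phi_add: "Phi c (a + b) = Phi c a + Phi c b"
  by (simp add: Phi_def frag_extend_add lookup_add)

lemma Phi_of: "Phi c (frag_of s) = (if c s then 1 else 0)"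
  by (simp add: Phi_def)

lemma Phi_zero: "Phi c 0 = 0"
  by (simp add: Phi_def)

lemma bd2: "chain_boundary 2 (frag_of s) =
   frag_of (singular_face 2 0 s) - frag_of (singular_face 2 1 s) + frag_of (singular_face 2 2 s)"
  by (simp add: chain_boundary_of numeral_2_eq_2 frag_cmul_minus_one)

lemma bd1: "chain_boundary 1 (frag_of s) =
   frag_of (singular_face 1 0 s) - frag_of (singular_face 1 1 s)"
  by (simp add: chain_boundary_of frag_cmul_minus_one)

lemma bd1': "chain_boundary (Suc 0) (frag_of s) =
   frag_of (singular_face 1 0 s) - frag_of (singular_face 1 1 s)"
  by (simp add: chain_boundary_of frag_cmul_minus_one)

lemma even_bd:
  assumes "Z2_cocycle1 Y c" "singular_chain 2 Y D"
  shows "even (Phi c (chain_boundary 2 D))"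
proof -
  have "Poly_Mapping.keys D \<subseteq> singular_simplex_set 2 Y"
    using assms(2) by (simp add: singular_chain_def)
  then show ?thesis
  proof (induction rule: frag_induction)
    case zero then show ?case by (simp add: Phi_zero)
  next
    case (one s)
    then have "((c (singular_face 2 0 s) \<noteq> c (singular_face 2 1 s)) \<noteq> c (singular_face 2 2 s)) = False"
      using assms(1) by (simp add: Z2_cocycle1_def)
    then show ?case by (simp add: bd2 Phi_add Phi_diff Phi_of) blast
  next
    case (diff a b) then show ?case by (simp add: chain_boundary_diff Phi_diff)
  qed
qed

abbreviation "e0 \<equiv> (\<lambda>j::nat. if j = 0 then 1 else (0::real))"

lemma sfe0: "simplical_face k e0 \<in> standard_simplex 1" if "k \<le> 1"
  using simplical_face_in_standard_simplex[of 1 k e0] that by simp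

lemma sfv: "simplical_face 0 e0 0 = 0" "simplical_face 0 e0 (Suc 0) = 1"
   "simplical_face (Suc 0) e0 0 = 1" "simplical_face (Suc 0) e0 (Suc 0) = 0"
  by (simp_all add: simplical_face_def)

lemma face_seg0: "singular_face 1 0 (seg p b) = restrict (\<lambda>_. b) (standard_simplex 0)"
  using sfe0[of 0] sfe0[of 1] by (intro ext) (auto simp: singular_face_def seg_def standard_simplex_0 sfv)

lemma face_seg1: "singular_face 1 1 (seg p b) = restrict (\<lambda>_. p) (standard_simplex 0)"
  using sfe0[of 0] sfe0[of 1] by (intro ext) (auto simp: singular_face_def seg_def standard_simplex_0 sfv)

lemma face_tau: "singular_face 1 k t = restrict (\<lambda>_. t (simplical_face k e0)) (standard_simplex 0)"
  by (rule ext) (auto simp: singular_face_def standard_simplex_0)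

lemma cvx_cob:
  assumes A: "cvx A" and cc: "Z2_cocycle1 (subtopology (powertop_real UNIV) A) c"
  shows "Z2_coboundary1 (subtopology (powertop_real UNIV) A) c"
proof (cases "A = {}")
  case True
  then show ?thesis by (simp add: Z2_coboundary1_def singular_simplex_empty)
next
  case False
  then obtain p where p: "p \<in> A" by auto
  let ?Y = "subtopology (powertop_real UNIV) A"
  define \<kappa> where "\<kappa> = restrict (\<lambda>_. p) (standard_simplex 1)"
  define K2 where "K2 = restrict (\<lambda>_. p) (standard_simplex 2)"
  have K2: "singular_simplex 2 ?Y K2"
    unfolding singular_simplex_def K2_def
    by (auto intro!: continuous_map_eq[of _ _ "\<lambda>_. p"] simp: p)
  have facesK: "singular_face 2 k K2 = \<kappa>" if "k \<le> 2" for k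
    using simplical_face_in_standard_simplex[of 2 k] that
    by (auto simp: K2_def \<kappa>_def singular_face_def o_def)
  have c\<kappa>: "\<not> c \<kappa>"
    using cc K2 unfolding Z2_cocycle1_def by (auto simp: facesK)
  show ?thesis
    unfolding Z2_coboundary1_def
  proof (intro exI allI impI)
    fix \<tau> assume \<tau>: "singular_simplex 1 ?Y \<tau>"
    define a where "a = \<tau> (simplical_face 1 e0)"
    define b where "b = \<tau> (simplical_face 0 e0)"
    have "simplical_face k e0 \<in> standard_simplex 1" if "k \<le> 1" for k
      using simplical_face_in_standard_simplex[of 1 k e0] that by simp
    then have ab: "a \<in> A" "b \<in> A"
      using \<tau> unfolding a_def b_def singular_simplex_def continuous_map_def by auto
    define z where "z = frag_of \<tau> - frag_of (seg p b) + frag_of (seg p a)"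
    have sa: "singular_simplex 1 ?Y (seg p a)" and sb: "singular_simplex 1 ?Y (seg p b)"
      using seg_ss[OF A p] ab by auto
    have zc: "singular_chain 1 ?Y z"
      unfolding z_def using \<tau> sa sb
      by (intro singular_chain_add singular_chain_diff) (auto simp: singular_chain_of)
    have zb: "chain_boundary 1 z = 0"
      unfolding z_def chain_boundary_add chain_boundary_diff bd1 face_seg0 face_seg1 face_tau[of _ \<tau>]
         a_def[symmetric] b_def[symmetric]
      by simp
    have cyc: "singular_relcycle 1 ?Y {} z"
      using zc zb by (simp add: singular_cycle)
    have hr: "homologous_rel 1 ?Y {} (chain_map 1 id z) (chain_map 1 (\<lambda>_. p) z)"
      by (rule homotopic_imp_homologous_rel_chain_maps[OF homot[OF A p] cyc])
    have ext: "restrict s (standard_simplex 1) = s" if "singular_simplex 1 ?Y s" for s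
      using that by (simp add: singular_simplex_def extensional_restrict)
    have m1: "chain_map 1 id z = z"
      unfolding z_def using \<tau> sa sb ext[OF \<tau>] ext[OF sa] ext[OF sb]
      by (simp add: chain_map_add chain_map_diff del: One_nat_def)
    have m2: "chain_map 1 (\<lambda>_. p) z = frag_of \<kappa>"
      unfolding z_def by (simp add: chain_map_add chain_map_diff simplex_map_def o_def \<kappa>_def)
    obtain D where D: "singular_chain 2 ?Y D" "chain_boundary 2 D = z - frag_of \<kappa>"
      using hr unfolding m1 m2 homologous_rel_def singular_boundary
      by (metis one_add_one plus_1_eq_Suc)
    have "even (Phi c (z - frag_of \<kappa>))"
      using even_bd[OF cc D(1)] D(2) by simp
    then have "even ((if c \<tau> then 1 else 0) - (if c (seg p b) then 1 else 0) + (if c (seg p a) then 1 else (0::int)))"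
      using c\<kappa> by (simp add: z_def Phi_add Phi_diff Phi_of)
    then have "c \<tau> = (c (seg p b) \<noteq> c (seg p a))"
      by (auto split: if_splits)
    moreover have "singular_face 1 0 \<tau> e0 = b" "singular_face 1 1 \<tau> e0 = a"
      unfolding face_tau a_def b_def by (simp_all add: standard_simplex_0 del: One_nat_def)
    ultimately show "c \<tau> = ((\<lambda>g. c (seg p (g e0))) (singular_face 1 0 \<tau>) \<noteq> (\<lambda>g. c (seg p (g e0))) (singular_face 1 1 \<tau>))"
      by simp
  qed
qed

lemma glue:
  assumes sub: "U \<subseteq> topspace X"
    and disj: "\<And>P Q. P \<in> \<P> \<Longrightarrow> Q \<in> \<P> \<Longrightarrow> P \<noteq> Q \<Longrightarrow> P \<inter> Q = {}"
    and un: "\<Union>\<P> = U"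
    and op: "\<And>P. P \<in> \<P> \<Longrightarrow> openin (subtopology X U) P"
    and cob: "\<And>P. P \<in> \<P> \<Longrightarrow> Z2_coboundary1 (subtopology X P) c"
  shows "Z2_coboundary1 (subtopology X U) c"
proof -
  define F where "F P = (SOME f :: ((nat \<Rightarrow> real) \<Rightarrow> _) \<Rightarrow> bool. \<forall>\<tau>. singular_simplex 1 (subtopology X P) \<tau> \<longrightarrow>
     c \<tau> = (f (singular_face 1 0 \<tau>) \<noteq> f (singular_face 1 1 \<tau>)))" for P
  have F: "c \<tau> = (F P (singular_face 1 0 \<tau>) \<noteq> F P (singular_face 1 1 \<tau>))"
    if "P \<in> \<P>" "singular_simplex 1 (subtopology X P) \<tau>" for P \<tau>
  proof -
    have "\<exists>f :: ((nat \<Rightarrow> real) \<Rightarrow> _) \<Rightarrow> bool. \<forall>\<tau>. singular_simplex 1 (subtopology X P) \<tau> \<longrightarrow>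
     c \<tau> = (f (singular_face 1 0 \<tau>) \<noteq> f (singular_face 1 1 \<tau>))"
      using cob[OF that(1)] unfolding Z2_coboundary1_def .
    from someI_ex[OF this] show ?thesis using that(2) unfolding F_def by blast
  qed
  define f where "f g = F (THE P. P \<in> \<P> \<and> g e0 \<in> P) g" for g :: "(nat \<Rightarrow> real) \<Rightarrow> 'a"
  have theP: "(THE P. P \<in> \<P> \<and> y \<in> P) = Q" if "Q \<in> \<P>" "y \<in> Q" for Q y
    using that disj by (metis (no_types, lifting) IntI empty_iff the_equality)
  show ?thesis
    unfolding Z2_coboundary1_def
  proof (rule exI[where x=f], intro allI impI)
    fix \<tau> assume \<tau>: "singular_simplex 1 (subtopology X U) \<tau>"
    let ?K = "\<tau> ` standard_simplex 1"
    have ct: "continuous_map (subtopology (powertop_real UNIV) (standard_simplex 1)) (subtopology X U) \<tau>"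
      using \<tau> by (simp add: singular_simplex_def)
    have conn: "connectedin (subtopology X U) ?K"
      by (rule connectedin_continuous_map_image[OF ct])
         (simp add: connectedin_subtopology connectedin_standard_simplex)
    have sf: "simplical_face k e0 \<in> standard_simplex 1" if "k \<le> 1" for k
      using sfe0 that by simp
    have "\<tau> (simplical_face 0 e0) \<in> topspace (subtopology X U)"
      using ct sf[of 0] unfolding continuous_map_def by auto
    then have "\<tau> (simplical_face 0 e0) \<in> U" by simp
    then obtain P where P: "P \<in> \<P>" "\<tau> (simplical_face 0 e0) \<in> P" using un by blast
    have "openin (subtopology X U) (\<Union>(\<P> - {P}))"
      using op by (intro openin_Union) auto
    moreover have "topspace (subtopology X U) - P = \<Union>(\<P> - {P})"
      using sub un disj[OF P(1)] P(1) by auto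
    ultimately have "closedin (subtopology X U) P"
      using op[OF P(1)] openin_subset[OF op[OF P(1)]] by (simp add: closedin_def)
    then have "?K \<subseteq> P \<or> disjnt ?K P"
      by (rule connectedin_clopen_cases[OF conn _ op[OF P(1)]])
    moreover have "\<not> disjnt ?K P" using P(2) sf[of 0] by (auto simp: disjnt_def)
    ultimately have KP: "?K \<subseteq> P" by blast
    have \<tau>P: "singular_simplex 1 (subtopology X P) \<tau>"
      using \<tau> KP by (simp add: singular_simplex_subtopology)
    have fv: "singular_face 1 k \<tau> e0 = \<tau> (simplical_face k e0)" for k
      unfolding face_tau by (simp add: standard_simplex_0 del: One_nat_def)
    have "f (singular_face 1 k \<tau>) = F P (singular_face 1 k \<tau>)" if "k \<le> 1" for k
      unfolding f_def fv using theP[OF P(1)] KP sf[OF that] by auto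
    then show "c \<tau> = (f (singular_face 1 0 \<tau>) \<noteq> f (singular_face 1 1 \<tau>))"
      using F[OF P(1) \<tau>P] by simp
  qed
qed

lemma real_char:
  assumes K: "simplicial_complex K"
  shows "x \<in> realization K \<longleftrightarrow> (\<forall>v. 0 \<le> x v) \<and> {v. x v \<noteq> 0} \<in> K \<and> sum x {v. x v \<noteq> 0} = 1"
proof
  assume "x \<in> realization K"
  then obtain s where s: "s \<in> K" "{v. x v \<noteq> 0} \<subseteq> s" "sum x s = 1" and nn: "\<forall>v. 0 \<le> x v"
    unfolding realization_def by auto
  have fs: "finite s" using K s(1) unfolding simplicial_complex_def by auto
  have eq: "sum x s = sum x {v. x v \<noteq> 0}"
    by (rule sum.mono_neutral_right[OF fs s(2)]) auto
  have ne: "{v. x v \<noteq> 0} \<noteq> {}"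
  proof
    assume "{v. x v \<noteq> 0} = {}"
    then have "sum x {v. x v \<noteq> 0} = 0" by (simp only: sum.empty)
    then show False using eq s(3) by simp
  qed
  have "{v. x v \<noteq> 0} \<in> K" using K s(1,2) ne unfolding simplicial_complex_def by blast
  then show "(\<forall>v. 0 \<le> x v) \<and> {v. x v \<noteq> 0} \<in> K \<and> sum x {v. x v \<noteq> 0} = 1"
    using nn eq s(3) by simp
next
  assume "(\<forall>v. 0 \<le> x v) \<and> {v. x v \<noteq> 0} \<in> K \<and> sum x {v. x v \<noteq> 0} = 1"
  then show "x \<in> realization K" unfolding realization_def by blast
qed

definition Osimp :: "'v set set \<Rightarrow> 'v set \<Rightarrow> ('v \<Rightarrow> real) set" where
  "Osimp M t = {x \<in> realization M. {v. x v \<noteq> 0} = t}"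

lemma Osimp_cvx:
  assumes M: "simplicial_complex M"
  shows "cvx (Osimp M t)"
  unfolding cvx_def
proof (intro ballI allI impI)
  fix x y and u :: real
  assume x: "x \<in> Osimp M t" and y: "y \<in> Osimp M t" and u: "0 \<le> u \<and> u \<le> 1"
  let ?z = "\<lambda>v. (1-u) * x v + u * y v"
  have xs: "{v. x v \<noteq> 0} = t" and xr0: "x \<in> realization M" using x unfolding Osimp_def by auto
  have xr: "(\<forall>v. 0 \<le> x v) \<and> t \<in> M \<and> sum x t = 1"
    using xr0 real_char[OF M, of x] unfolding xs by simp
  have ys: "{v. y v \<noteq> 0} = t" and yr0: "y \<in> realization M" using y unfolding Osimp_def by auto
  have yr: "(\<forall>v. 0 \<le> y v) \<and> t \<in> M \<and> sum y t = 1"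
    using yr0 real_char[OF M, of y] unfolding ys by simp
  show "?z \<in> Osimp M t"
  proof (cases "u = 0 \<or> u = 1")
    case True
    then have "?z = x \<or> ?z = y" by auto
    then show ?thesis using x y by metis
  next
    case False
    then have u': "0 < u" "0 < 1 - u" using u by auto
    have nn: "\<forall>v. 0 \<le> ?z v" using xr yr u by simp
    have sz: "{v. ?z v \<noteq> 0} = t"
    proof -
      have "?z v \<noteq> 0 \<longleftrightarrow> x v \<noteq> 0 \<or> y v \<noteq> 0" for v
      proof -
        have a: "0 \<le> (1-u) * x v" "0 \<le> u * y v" using xr yr u by auto
        have "(1-u) * x v = 0 \<longleftrightarrow> x v = 0" "u * y v = 0 \<longleftrightarrow> y v = 0" using u' by auto
        then show ?thesis using a by linarith
      qed
      then show ?thesis using xs ys by auto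
    qed
    have "sum ?z t = (1-u) * sum x t + u * sum y t"
      by (simp add: sum.distrib sum_distrib_left)
    then have "sum ?z t = 1" using xr yr by simp
    then show ?thesis using nn sz xr real_char[OF M, of ?z] unfolding Osimp_def by simp
  qed
qed

lemma openin_coord:
  assumes "open (B :: real set)"
  shows "openin (powertop_real UNIV) {x :: 'v \<Rightarrow> real. x v \<in> B}"
proof -
  have c: "continuous_map (powertop_real UNIV) euclideanreal (\<lambda>x :: 'v \<Rightarrow> real. x v)"
    by (rule continuous_map_product_projection) simp
  have b: "openin euclideanreal B" using assms by simp
  have "openin (powertop_real UNIV) {x \<in> topspace (powertop_real UNIV). x v \<in> B}"
    by (rule openin_continuous_map_preimage[OF c b])
  moreover have "topspace (powertop_real UNIV) = (UNIV :: ('v\<Rightarrow>real) set)" by simp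
  ultimately show ?thesis by simp
qed

lemma openin_pos:
  assumes "finite t"
  shows "openin (powertop_real UNIV) {x :: 'v \<Rightarrow> real. \<forall>v\<in>t. 0 < x v}"
  using assms
proof (induction t rule: finite_induct)
  case empty
  have "topspace (powertop_real UNIV) = (UNIV :: ('v\<Rightarrow>real) set)" by simp
  moreover have "{x :: 'v \<Rightarrow> real. \<forall>v\<in>{}. 0 < x v} = UNIV" by simp
  ultimately show ?case using openin_topspace[of "powertop_real (UNIV::'v set)"] by simp
next
  case (insert a t)
  have "{x :: 'v \<Rightarrow> real. \<forall>v\<in>insert a t. 0 < x v} = {x. x a \<in> {0<..}} \<inter> {x. \<forall>v\<in>t. 0 < x v}" by auto
  moreover have "openin (powertop_real UNIV) {x :: 'v \<Rightarrow> real. x a \<in> {0<..}}"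
    by (rule openin_coord) simp
  ultimately show ?case using insert by (simp add: openin_Int)
qed

lemma openin_nz:
  "openin (powertop_real UNIV) {x :: 'v \<Rightarrow> real. \<exists>v\<in>S. x v \<noteq> 0}"
proof -
  have o: "openin (powertop_real UNIV) {x :: 'v \<Rightarrow> real. x v \<in> -{0}}" for v
    by (rule openin_coord) (simp add: open_Compl)
  have "{x :: 'v \<Rightarrow> real. \<exists>v\<in>S. x v \<noteq> 0} = \<Union>((\<lambda>v. {x. x v \<in> -{0}}) ` S)" by auto
  moreover have "openin (powertop_real UNIV) (\<Union>((\<lambda>v. {x :: 'v \<Rightarrow> real. x v \<in> -{0}}) ` S))"
    by (rule openin_Union) (use o in auto)
  ultimately show ?thesis by simp
qed

lemma Osimp_open:
  fixes M :: "'v set set"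
  assumes M: "simplicial_complex M" and t: "t \<in> M" and mx: "\<And>s. s \<in> M \<Longrightarrow> t \<subseteq> s \<Longrightarrow> s = t"
    and sub: "Osimp M t \<subseteq> U" "U \<subseteq> realization M"
  shows "openin (subtopology (realization_top M) U) (Osimp M t)"
proof -
  have ft: "finite t" using M t unfolding simplicial_complex_def by auto
  define W where "W = {x :: 'v \<Rightarrow> real. \<forall>v\<in>t. 0 < x v}"
  have "openin (realization_top M) (realization M \<inter> W)"
    unfolding realization_top_def openin_subtopology
    by (intro exI[of _ W] conjI) (simp_all add: W_def openin_pos[OF ft] Int_commute)
  moreover have "Osimp M t = realization M \<inter> W \<inter> U"
  proof
    show "Osimp M t \<subseteq> realization M \<inter> W \<inter> U"
    proof
      fix x assume x: "x \<in> Osimp M t"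
      then have xr: "x \<in> realization M" and xs: "{v. x v \<noteq> 0} = t" unfolding Osimp_def by auto
      have "\<forall>v. 0 \<le> x v" using xr real_char[OF M] by blast
      then have "x \<in> W" unfolding W_def using xs by (force simp: order.order_iff_strict)
      then show "x \<in> realization M \<inter> W \<inter> U" using xr x sub by blast
    qed
    show "realization M \<inter> W \<inter> U \<subseteq> Osimp M t"
    proof
      fix x assume x: "x \<in> realization M \<inter> W \<inter> U"
      then have r: "(\<forall>v. 0 \<le> x v) \<and> {v. x v \<noteq> 0} \<in> M" using real_char[OF M] by blast
      have "t \<subseteq> {v. x v \<noteq> 0}" using x unfolding W_def by force
      then have "{v. x v \<noteq> 0} = t" using mx r by blast
      then show "x \<in> Osimp M t" using x unfolding Osimp_def by blast
    qed
  qed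
  ultimately show ?thesis unfolding openin_subtopology by blast
qed

lemma cocycle_sub: "Z2_cocycle1 X c \<Longrightarrow> Z2_cocycle1 (subtopology X S) c"
  unfolding Z2_cocycle1_def by (simp add: singular_simplex_subtopology)

lemma Osimp_cob:
  assumes M: "simplicial_complex M" and cc: "Z2_cocycle1 (realization_top M) c"
  shows "Z2_coboundary1 (subtopology (realization_top M) (Osimp M t)) c"
proof -
  have O: "Osimp M t \<subseteq> realization M" by (auto simp: Osimp_def)
  have eq: "subtopology (realization_top M) (Osimp M t) = subtopology (powertop_real UNIV) (Osimp M t)"
    unfolding realization_top_def subtopology_subtopology using O by (simp add: Int_absorb1)
  show ?thesis unfolding eq
    by (rule cvx_cob[OF Osimp_cvx[OF M]]) (metis cocycle_sub[OF cc] eq)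
qed

lemma Uchar:
  assumes M: "simplicial_complex M" and H: "simplicial_complex H"
  shows "x \<in> realization M - realization H \<longleftrightarrow> x \<in> realization M \<and> {v. x v \<noteq> 0} \<notin> H"
  using real_char[OF M, of x] real_char[OF H, of x] by blast

lemma topspace_rt: "topspace (realization_top M) = realization M"
  by (simp add: realization_top_def)

lemma Osimp_sub_U:
  assumes M: "simplicial_complex M" and H: "simplicial_complex H" and t: "t \<notin> H"
  shows "Osimp M t \<subseteq> realization M - realization H"
proof
  fix x assume "x \<in> Osimp M t"
  then have "x \<in> realization M" "{v. x v \<noteq> 0} = t" unfolding Osimp_def by blast+
  then show "x \<in> realization M - realization H" using Uchar[OF M H] t by blast
qed

lemma Osimp_disj: "t \<noteq> t' \<Longrightarrow> Osimp M t \<inter> Osimp M t' = {}"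
  unfolding Osimp_def by blast

lemma adm_skel:
  fixes M :: "'v set set"
  assumes fsc: "finite_simplicial_complex M" and dim: "sc_dim M n"
    and cc: "Z2_cocycle1 (realization_top M) c"
  shows "cut_admissible M n c {s\<in>M. card s \<le> n}"
proof -
  have M: "simplicial_complex M" using fsc by (simp add: finite_simplicial_complex_def)
  let ?H = "{s\<in>M. card s \<le> n}"
  have H: "simplicial_complex ?H"
    unfolding simplicial_complex_def
  proof (intro conjI)
    show "\<forall>s\<in>?H. finite s \<and> s \<noteq> {}" using M by (simp add: simplicial_complex_def)
  next
    show "\<forall>s\<in>?H. \<forall>t. t \<subseteq> s \<and> t \<noteq> {} \<longrightarrow> t \<in> ?H"
    proof (intro ballI allI impI)
    fix s t assume s: "s \<in> ?H" and t: "t \<subseteq> s \<and> t \<noteq> {}"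
    have "finite s" using s M by (simp add: simplicial_complex_def)
    then have "card t \<le> card s" using t card_mono by blast
    then show "t \<in> ?H" using s t M unfolding simplicial_complex_def by auto
  qed
  qed
  let ?U = "realization M - realization ?H"
  let ?T = "{t\<in>M. card t = n + 1}"
  have cardle: "card s \<le> n + 1" if "s \<in> M" for s using dim that by (simp add: sc_dim_def)
  have "Z2_coboundary1 (subtopology (realization_top M) ?U) c"
  proof (rule glue[where \<P> = "Osimp M ` ?T"])
    show "?U \<subseteq> topspace (realization_top M)" by (auto simp: topspace_rt)
  next
    fix P Q assume "P \<in> Osimp M ` ?T" "Q \<in> Osimp M ` ?T" "P \<noteq> Q"
    then obtain t t' where "P = Osimp M t" "Q = Osimp M t'" "t \<noteq> t'" by blast
    then show "P \<inter> Q = {}" using Osimp_disj[of t t' M] by simp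
  next
    show "\<Union>(Osimp M ` ?T) = ?U"
    proof
      show "\<Union>(Osimp M ` ?T) \<subseteq> ?U"
      proof (rule Union_least)
        fix P assume "P \<in> Osimp M ` ?T"
        then obtain t where "t \<in> ?T" "P = Osimp M t" by blast
        then show "P \<subseteq> ?U" using Osimp_sub_U[OF M H, of t] by simp
      qed
    next
      show "?U \<subseteq> \<Union>(Osimp M ` ?T)"
      proof
        fix x assume x: "x \<in> ?U"
        then have xr: "x \<in> realization M" and ns: "{v. x v \<noteq> 0} \<notin> ?H" using Uchar[OF M H] by blast+
        have sM: "{v. x v \<noteq> 0} \<in> M" using xr real_char[OF M] by blast
        then have "card {v. x v \<noteq> 0} = n + 1" using ns cardle[OF sM] by auto
        then have "{v. x v \<noteq> 0} \<in> ?T" using sM by blast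
        moreover have "x \<in> Osimp M {v. x v \<noteq> 0}" using xr by (simp add: Osimp_def)
        ultimately show "x \<in> \<Union>(Osimp M ` ?T)" by blast
      qed
    qed
  next
    fix P assume "P \<in> Osimp M ` ?T"
    then obtain t where t: "t \<in> M" "card t = n + 1" and P: "P = Osimp M t" by auto
    have mx: "s = t" if "s \<in> M" "t \<subseteq> s" for s
    proof -
      have "finite s" using that M by (simp add: simplicial_complex_def)
      moreover have "card t = card s" using card_mono[OF \<open>finite s\<close> that(2)] cardle[OF that(1)] t by simp
      ultimately show ?thesis using card_subset_eq that(2) by metis
    qed
    have os: "Osimp M t \<subseteq> ?U" using Osimp_sub_U[OF M H, of t] t by simp
    have us: "?U \<subseteq> realization M" by blast
    show "openin (subtopology (realization_top M) ?U) P"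
      unfolding P using Osimp_open[OF M t(1) mx os us] by simp
  next
    fix P assume "P \<in> Osimp M ` ?T"
    then show "Z2_coboundary1 (subtopology (realization_top M) P) c"
      using Osimp_cob[OF M cc] by auto
  qed
  then show ?thesis
    unfolding cut_admissible_def subcomplex_def restricts_to_zero_def using H by auto
qed

lemma adm_remove:
  fixes M :: "'v set set"
  assumes fsc: "finite_simplicial_complex M" and dim: "sc_dim M n"
    and cc: "Z2_cocycle1 (realization_top M) c"
    and adm: "cut_admissible M n c H" and \<sigma>: "\<sigma> \<in> H" "card \<sigma> = n"
    and nt: "\<not> (\<exists>t\<in>simplices_of_dim M n. \<sigma> \<subseteq> t)"
  shows "cut_admissible M n c (H - {\<sigma>})"
proof -
  have M: "simplicial_complex M" using fsc by (simp add: finite_simplicial_complex_def)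
  have HM: "H \<subseteq> M" and H: "simplicial_complex H" and Hc: "\<forall>s\<in>H. card s \<le> n"
    and rz: "Z2_coboundary1 (subtopology (realization_top M) (realization M - realization H)) c"
    using adm unfolding cut_admissible_def subcomplex_def restricts_to_zero_def by auto
  have \<sigma>M: "\<sigma> \<in> M" using \<sigma> HM by auto
  have cardle: "card s \<le> n + 1" if "s \<in> M" for s using dim that by (simp add: sc_dim_def)
  have mx: "s = \<sigma>" if "s \<in> M" "\<sigma> \<subseteq> s" for s
  proof (rule ccontr)
    assume ne: "s \<noteq> \<sigma>"
    have fs: "finite s" using that M by (simp add: simplicial_complex_def)
    have "card \<sigma> < card s" using psubset_card_mono[OF fs] that ne by blast
    then have "card s = n + 1" using cardle[OF that(1)] \<sigma> by simp
    then have "s \<in> simplices_of_dim M n" using that by (simp add: simplices_of_dim_def)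
    then show False using nt that by blast
  qed
  let ?H = "H - {\<sigma>}"
  have H': "simplicial_complex ?H"
    unfolding simplicial_complex_def
  proof (intro conjI)
    show "\<forall>s\<in>?H. finite s \<and> s \<noteq> {}" using H by (simp add: simplicial_complex_def)
  next
    show "\<forall>s\<in>?H. \<forall>t. t \<subseteq> s \<and> t \<noteq> {} \<longrightarrow> t \<in> ?H"
    proof (intro ballI allI impI)
    fix s t assume s: "s \<in> ?H" and t: "t \<subseteq> s \<and> t \<noteq> {}"
    have "t \<in> H" using s t H unfolding simplicial_complex_def by blast
    moreover have "t \<noteq> \<sigma>"
    proof
      assume "t = \<sigma>"
      then have "s = \<sigma>" using mx s t HM by blast
      then show False using s by simp
    qed
    ultimately show "t \<in> ?H" by simp
  qed
  qed
  let ?U = "realization M - realization H"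
  let ?U' = "realization M - realization ?H"
  let ?O = "Osimp M \<sigma>"
  have O_not_U: "?O \<inter> ?U = {}"
  proof -
    have "x \<notin> ?U" if "x \<in> ?O" for x
      using that Uchar[OF M H, of x] \<sigma>(1) unfolding Osimp_def by blast
    then show ?thesis by blast
  qed
  have "Z2_coboundary1 (subtopology (realization_top M) ?U') c"
  proof (rule glue[where \<P> = "{?U, ?O}"])
    show "?U' \<subseteq> topspace (realization_top M)" by (auto simp: topspace_rt)
  next
    fix P Q assume "P \<in> {?U, ?O}" "Q \<in> {?U, ?O}" "P \<noteq> Q"
    then show "P \<inter> Q = {}" using O_not_U by blast
  next
    have "x \<in> ?U \<or> x \<in> ?O \<longleftrightarrow> x \<in> ?U'" for x
      using Uchar[OF M H, of x] Uchar[OF M H', of x] \<sigma>(1) unfolding Osimp_def by blast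
    then show "\<Union>{?U, ?O} = ?U'" by blast
  next
    have Osub: "?O \<subseteq> ?U'" using Osimp_sub_U[OF M H', of \<sigma>] by simp
    fix P assume "P \<in> {?U, ?O}"
    then consider "P = ?U" | "P = ?O" by blast
    then show "openin (subtopology (realization_top M) ?U') P"
    proof cases
      case 1
      define V where "V = {x :: 'v \<Rightarrow> real. \<exists>v\<in>-\<sigma>. x v \<noteq> 0}"
      have oV: "openin (realization_top M) (realization M \<inter> V)"
        unfolding realization_top_def openin_subtopology
        by (intro exI[of _ V] conjI) (simp_all add: V_def openin_nz Int_commute)
      have "?U = (realization M \<inter> V) \<inter> ?U'"
      proof
        show "?U \<subseteq> (realization M \<inter> V) \<inter> ?U'"
        proof
          fix x assume x: "x \<in> ?U"
          then have xr: "x \<in> realization M" and ns: "{v. x v \<noteq> 0} \<notin> H" using Uchar[OF M H] by blast+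
          have sM: "{v. x v \<noteq> 0} \<in> M" using xr real_char[OF M] by blast
          have ne: "{v. x v \<noteq> 0} \<noteq> {}" using sM M unfolding simplicial_complex_def by blast
          have "x \<in> V"
          proof (rule ccontr)
            assume "x \<notin> V"
            then have "{v. x v \<noteq> 0} \<subseteq> \<sigma>" unfolding V_def by auto
            then have "{v. x v \<noteq> 0} \<in> H" using H \<sigma>(1) ne unfolding simplicial_complex_def by blast
            then show False using ns by simp
          qed
          moreover have "x \<in> ?U'" using xr ns Uchar[OF M H'] by blast
          ultimately show "x \<in> (realization M \<inter> V) \<inter> ?U'" using xr by blast
        qed
      next
        show "(realization M \<inter> V) \<inter> ?U' \<subseteq> ?U"
        proof
          fix x assume x: "x \<in> (realization M \<inter> V) \<inter> ?U'"
          then have xr: "x \<in> realization M" and ns: "{v. x v \<noteq> 0} \<notin> ?H" using Uchar[OF M H'] by blast+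
          have "{v. x v \<noteq> 0} \<noteq> \<sigma>" using x unfolding V_def by auto
          then have "{v. x v \<noteq> 0} \<notin> H" using ns by blast
          then show "x \<in> ?U" using xr Uchar[OF M H] by blast
        qed
      qed
      then show ?thesis unfolding 1 openin_subtopology using oV by blast
    next
      case 2
      have us: "?U' \<subseteq> realization M" by blast
      show ?thesis unfolding 2 using Osimp_open[OF M \<sigma>M mx Osub us] by simp
    qed
  next
    fix P assume "P \<in> {?U, ?O}"
    then show "Z2_coboundary1 (subtopology (realization_top M) P) c"
      using rz Osimp_cob[OF M cc] by auto
  qed
  then show ?thesis
    unfolding cut_admissible_def subcomplex_def restricts_to_zero_def using H' HM Hc by auto
qed

theorem mainTheorem7:
  fixes M :: "'v set set" and n :: nat
    and c :: "((nat \<Rightarrow> real) \<Rightarrow> ('v \<Rightarrow> real)) \<Rightarrow> bool"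
  assumes "finite_simplicial_complex M"
    and "sc_dim M n"
    and "Z2_cocycle1 (realization_top M) c"
    and "\<not> Z2_coboundary1 (realization_top M) c"
  shows "cut M n c \<le> (n + 1) * Vol M n
    \<and> (\<forall>H. cut_admissible M n c H \<and> card (simplices_of_dim H (n - 1)) = cut M n c \<longrightarrow>
          (\<forall>s\<in>simplices_of_dim H (n - 1). \<exists>t\<in>simplices_of_dim M n. s \<subseteq> t))"
proof -
  note fsc = assms(1) and dim = assms(2) and cc = assms(3)
  have M: "simplicial_complex M" and fM: "finite M" using fsc by (auto simp: finite_simplicial_complex_def)
  define P where "P k \<longleftrightarrow> (\<exists>H. cut_admissible M n c H \<and> k = card (simplices_of_dim H (n - 1)))" for k
  have cut_eq: "cut M n c = (LEAST k. P k)" unfolding cut_def P_def ..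
  have exP: "P (card (simplices_of_dim {s\<in>M. card s \<le> n} (n - 1)))"
    unfolding P_def using adm_skel[OF fsc dim cc] by blast
  have Pcut: "P (cut M n c)" unfolding cut_eq by (rule LeastI[of P, OF exP])
  have cut_le: "cut M n c \<le> card (simplices_of_dim H (n - 1))" if "cut_admissible M n c H" for H
    unfolding cut_eq by (rule Least_le) (use that P_def in blast)
  have part2: "\<forall>s\<in>simplices_of_dim H (n - 1). \<exists>t\<in>simplices_of_dim M n. s \<subseteq> t"
    if adm: "cut_admissible M n c H" and cH: "card (simplices_of_dim H (n - 1)) = cut M n c" for H
  proof (rule ballI, rule ccontr)
    fix s assume s: "s \<in> simplices_of_dim H (n - 1)" and nt: "\<not> (\<exists>t\<in>simplices_of_dim M n. s \<subseteq> t)"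
    have HM: "H \<subseteq> M" and Hc: "\<forall>s\<in>H. card s \<le> n"
      using adm unfolding cut_admissible_def subcomplex_def by auto
    have sH: "s \<in> H" and cs: "card s = n - 1 + 1" using s by (auto simp: simplices_of_dim_def)
    have "card s \<le> n" using Hc sH by blast
    then have cs': "card s = n" using cs by linarith
    have adm': "cut_admissible M n c (H - {s})"
      by (rule adm_remove[OF fsc dim cc adm sH cs' nt])
    have fH: "finite (simplices_of_dim H (n - 1))"
      using fM HM by (auto simp: simplices_of_dim_def intro: finite_subset)
    have eq: "simplices_of_dim (H - {s}) (n - 1) = simplices_of_dim H (n - 1) - {s}"
      by (auto simp: simplices_of_dim_def)
    have "card (simplices_of_dim (H - {s}) (n - 1)) = cut M n c - 1"
      unfolding eq using card_Diff_singleton[OF s] cH by simp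
    moreover have "0 < card (simplices_of_dim H (n - 1))"
      using fH s by (auto simp: card_gt_0_iff)
    ultimately show False using cut_le[OF adm'] cH by linarith
  qed
  obtain Hm where admm: "cut_admissible M n c Hm" and cm: "cut M n c = card (simplices_of_dim Hm (n - 1))"
    using Pcut unfolding P_def by blast
  define F where "F t = {s. s \<subseteq> t \<and> card s = n}" for t :: "'v set"
  have fin_sd: "finite (simplices_of_dim M n)" using fM by (simp add: simplices_of_dim_def)
  have finF: "finite (F t)" if "t \<in> simplices_of_dim M n" for t
  proof -
    have "finite t" using that M by (auto simp: simplices_of_dim_def simplicial_complex_def)
    then show ?thesis unfolding F_def by (rule rev_finite_subset[OF finite_Pow_iff[THEN iffD2]]) auto
  qed
  have cardF: "card (F t) = n + 1" if "t \<in> simplices_of_dim M n" for t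
  proof -
    have "finite t" "card t = n + 1" using that M by (auto simp: simplices_of_dim_def simplicial_complex_def)
    then show ?thesis unfolding F_def by (simp add: n_subsets)
  qed
  have sub: "simplices_of_dim Hm (n - 1) \<subseteq> (\<Union>t\<in>simplices_of_dim M n. F t)"
  proof
    fix s assume s: "s \<in> simplices_of_dim Hm (n - 1)"
    have Hc: "\<forall>s\<in>Hm. card s \<le> n" using admm unfolding cut_admissible_def by auto
    have "s \<in> Hm" "card s = n - 1 + 1" using s by (auto simp: simplices_of_dim_def)
    then have "card s = n" using Hc by fastforce
    moreover obtain t where "t \<in> simplices_of_dim M n" "s \<subseteq> t"
      using part2[OF admm cm[symmetric]] s by blast
    ultimately show "s \<in> (\<Union>t\<in>simplices_of_dim M n. F t)" unfolding F_def by blast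
  qed
  have "cut M n c \<le> card (\<Union>t\<in>simplices_of_dim M n. F t)"
    unfolding cm by (rule card_mono) (use fin_sd finF sub in auto)
  also have "\<dots> \<le> (\<Sum>t\<in>simplices_of_dim M n. card (F t))"
    by (rule card_UN_le[OF fin_sd])
  also have "\<dots> = (\<Sum>t\<in>simplices_of_dim M n. n + 1)"
    using cardF by simp
  also have "\<dots> = (n + 1) * Vol M n"
    by (simp add: Vol_def)
  finally show ?thesis using part2 by blast
qed

end
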